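(* For every $\epsilon>0$ there is a constant $C(\epsilon)>0$ such that $R_3(n)\le C(\epsilon)\, n^{1/3+\epsilon}$ for all positive integers $n$.
   Context: For a positive integer $n$, $R_3(n)$ denotes the number of ordered triples $(x,y,z)$ of positive integers with $n = xyz + x + y + z$. *)

theory Defs
  imports Complex_Main
begin

definition R3 :: "nat \<Rightarrow> nat" where
  "R3 n = card {(x :: nat, y :: nat, z :: nat). 0 < x \<and> 0 < y \<and> 0 < z \<and> n = x * y * z + x + y + z}"

end

theory Submission
  imports Defs "HOL-Computational_Algebra.Primes"
begin

definition D :: "nat \<Rightarrow> nat" where "D m = card {d. d dvd m}"

lemma D_mult: assumes "a > 0" "b > 0" shows "D (a*b) \<le> D a * D b"
proof -
  have "{d. d dvd a*b} \<subseteq> (\<lambda>(u,v). u*v) ` ({u. u dvd a} \<times> {v. v dvd b})"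
  proof
    fix d assume "d \<in> {d. d dvd a*b}"
    then have "d dvd a*b" by simp
    then obtain x y where "d = x*y" "x dvd a" "y dvd b" by (rule dvd_productE)
    then show "d \<in> (\<lambda>(u,v). u*v) ` ({u. u dvd a} \<times> {v. v dvd b})" by force
  qed
  then have "D (a*b) \<le> card ((\<lambda>(u,v). u*v) ` ({u. u dvd a} \<times> {v. v dvd b}))"
    unfolding D_def by (intro card_mono finite_imageI) (use assms in auto)
  also have "\<dots> \<le> card ({u. u dvd a} \<times> {v. v dvd b})" by (rule card_image_le) (use assms in auto)
  also have "\<dots> = D a * D b" by (simp add: D_def card_cartesian_product)
  finally show ?thesis .
qed

lemma D_primepow: assumes "prime (p::nat)" shows "D (p^k) = Suc k"
proof -
  have "{d. d dvd p^k} = (\<lambda>i. p^i) ` {..k}"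
    using divides_primepow_nat[OF assms] by auto
  moreover have "inj_on (\<lambda>i. p^i) {..k}"
    using prime_gt_1_nat[OF assms] by (intro inj_onI) (simp add: power_inject_exp)
  ultimately show ?thesis unfolding D_def by (simp add: card_image)
qed

lemma D_1: "D 1 = 1" by (simp add: D_def)

lemma k_bound:
  fixes \<epsilon> :: real assumes "\<epsilon> > 0"
  shows "real (Suc k) \<le> (1 + 1/(\<epsilon> * ln 2)) * 2 powr (real k * \<epsilon>)"
proof -
  define K where "K = 1 + 1/(\<epsilon> * ln 2)"
  have l2: "ln (2::real) > 0" by simp
  have K1: "K \<ge> 1" "K * (\<epsilon> * ln 2) \<ge> 1" using assms l2 unfolding K_def
    by (auto simp: field_simps)
  have "2 powr (real k * \<epsilon>) = exp (real k * \<epsilon> * ln 2)" by (simp add: powr_def)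
  also have "\<dots> \<ge> 1 + real k * \<epsilon> * ln 2" by (rule exp_ge_add_one_self)
  finally have e: "2 powr (real k * \<epsilon>) \<ge> 1 + real k * \<epsilon> * ln 2" .
  have "real (Suc k) = 1 + real k * 1" by simp
  also have "\<dots> \<le> K + real k * (K * (\<epsilon> * ln 2))"
    using K1 by (intro add_mono mult_left_mono) auto
  also have "\<dots> = K * (1 + real k * \<epsilon> * ln 2)" by (simp add: algebra_simps)
  also have "\<dots> \<le> K * 2 powr (real k * \<epsilon>)" using e K1 by (intro mult_left_mono) auto
  finally show ?thesis unfolding K_def .
qed

lemma divisor_bound_aux:
  fixes \<epsilon> :: real and P :: nat
  assumes eps: "\<epsilon> > 0" and P: "2 powr (1/\<epsilon>) \<le> real P"
  shows "m > 0 \<Longrightarrow> real (D m) \<le> (1 + 1/(\<epsilon> * ln 2)) ^ card {q \<in> {..<P}. prime q \<and> q dvd m} * real m powr \<epsilon>"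
proof (induction m rule: less_induct)
  case (less m)
  define K where "K = 1 + 1/(\<epsilon> * ln 2)"
  have K1: "K \<ge> 1" using eps unfolding K_def by simp
  define S where "S = (\<lambda>m. {q \<in> {..<P}. prime q \<and> q dvd m})"
  show ?case
  proof (cases "m = 1")
    case True
    have E: "{q \<in> {..<P}. prime q \<and> q dvd m} = {}" using True by auto
    show ?thesis unfolding E using True by (simp add: D_def)
  next
    case False
    then obtain p where p: "prime p" "p dvd m" using prime_factor_nat by blast
    define k where "k = multiplicity p m"
    define r where "r = m div p^k"
    have r: "m = p^k * r" "\<not> p dvd r" unfolding r_def k_def
      using multiplicity_decompose[of m p] less.prems p(1) prime_gt_1_nat[OF p(1)]
      by (simp_all add: multiplicity_dvd not_prime_unit prime_gt_1_nat)
    have k1: "k \<ge> 1" unfolding k_def using p less.prems multiplicity_gt_zero_iff[of m p] prime_gt_1_nat[OF p(1)]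
      by (simp add: Suc_le_eq not_prime_unit)
    have p2: "p \<ge> 2" using p prime_ge_2_nat by blast
    have rpos: "r > 0" using r less.prems by (cases r) auto
    have "p^k \<ge> 2" using p2 k1
    proof -
      have "p^1 \<le> p^k" using p2 k1 by (intro power_increasing) auto
      then show ?thesis using p2 by simp
    qed
    then have rm: "r < m" using r rpos by simp
    have IH: "real (D r) \<le> K ^ card (S r) * real r powr \<epsilon>"
      using less.IH[OF rm rpos] unfolding K_def S_def .
    have Dm: "real (D m) \<le> real (Suc k) * real (D r)"
    proof -
      have "D m \<le> D (p^k) * D r" using r rpos p2 D_mult[of "p^k" r] by simp
      then have "D m \<le> Suc k * D r" using D_primepow[OF p(1)] by simp
      then have "real (D m) \<le> real (Suc k * D r)" by (simp only: of_nat_le_iff)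
      then show ?thesis by (simp only: of_nat_mult)
    qed
    have finS: "finite (S m)" unfolding S_def by simp
    have sub: "S r \<subseteq> S m" unfolding S_def using r by auto
    have mpow: "real m powr \<epsilon> = real p powr (real k * \<epsilon>) * real r powr \<epsilon>"
    proof -
      have "real m = real p ^ k * real r" using r by simp
      then have "real m powr \<epsilon> = (real p ^ k) powr \<epsilon> * real r powr \<epsilon>"
        by (simp add: powr_mult)
      also have "(real p ^ k) = real p powr real k" using p2 by (simp add: powr_realpow)
      also have "(real p powr real k) powr \<epsilon> = real p powr (real k * \<epsilon>)" by (simp add: powr_powr)
      finally show ?thesis .
    qed
    show ?thesis
    proof (cases "p < P")
      case True
      have "insert p (S r) \<subseteq> S m" using sub True p unfolding S_def by auto
      moreover have "p \<notin> S r" using r unfolding S_def by auto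
      ultimately have cS: "Suc (card (S r)) \<le> card (S m)"
      proof -
        have "card (insert p (S r)) \<le> card (S m)" using finS \<open>insert p (S r) \<subseteq> S m\<close> by (rule card_mono)
        moreover have "finite (S r)" using finS sub by (rule finite_subset[rotated])
        ultimately show ?thesis using \<open>p \<notin> S r\<close> by simp
      qed
      have "real (Suc k) \<le> K * 2 powr (real k * \<epsilon>)" using k_bound[OF eps] unfolding K_def .
      also have "\<dots> \<le> K * real p powr (real k * \<epsilon>)"
        using p2 K1 eps by (intro mult_left_mono powr_mono2) auto
      finally have kb: "real (Suc k) \<le> K * real p powr (real k * \<epsilon>)" .
      have "real (D m) \<le> (K * real p powr (real k * \<epsilon>)) * (K ^ card (S r) * real r powr \<epsilon>)"
      proof -
        have "real (D m) \<le> real (Suc k) * (K ^ card (S r) * real r powr \<epsilon>)"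
          by (rule order.trans[OF Dm mult_left_mono[OF IH]]) simp
        also have "\<dots> \<le> (K * real p powr (real k * \<epsilon>)) * (K ^ card (S r) * real r powr \<epsilon>)"
          by (rule mult_right_mono[OF kb]) (use K1 in simp)
        finally show ?thesis .
      qed
      also have "\<dots> = K ^ Suc (card (S r)) * real m powr \<epsilon>" unfolding mpow by (simp add: ac_simps)
      also have "\<dots> \<le> K ^ card (S m) * real m powr \<epsilon>"
        using K1 cS by (intro mult_right_mono power_increasing) auto
      finally show ?thesis unfolding K_def S_def .
    next
      case False
      have "2 = (2 powr (1/\<epsilon>)) powr \<epsilon>" using eps by (simp add: powr_powr)
      also have "\<dots> \<le> real p powr \<epsilon>" using False P eps by (intro powr_mono2) auto
      finally have pe: "2 \<le> real p powr \<epsilon>" .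
      have "real (Suc k) \<le> 2 ^ k"
        by (induction k) auto
      also have "\<dots> \<le> (real p powr \<epsilon>) ^ k" using pe by (intro power_mono) auto
      also have "\<dots> = real p powr (real k * \<epsilon>)"
      proof -
        have "(real p powr \<epsilon>) ^ k = real p powr (\<epsilon> * real k)"
          using p2 by (simp add: powr_realpow[symmetric] powr_powr)
        then show ?thesis by (simp add: mult.commute)
      qed
      finally have kb: "real (Suc k) \<le> real p powr (real k * \<epsilon>)" .
      have "real (D m) \<le> real p powr (real k * \<epsilon>) * (K ^ card (S r) * real r powr \<epsilon>)"
      proof -
        have "real (D m) \<le> real (Suc k) * (K ^ card (S r) * real r powr \<epsilon>)"
          by (rule order.trans[OF Dm mult_left_mono[OF IH]]) simp
        also have "\<dots> \<le> real p powr (real k * \<epsilon>) * (K ^ card (S r) * real r powr \<epsilon>)"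
          by (rule mult_right_mono[OF kb]) (use K1 in simp)
        finally show ?thesis .
      qed
      also have "\<dots> = K ^ card (S r) * real m powr \<epsilon>" unfolding mpow by (simp add: ac_simps)
      also have "\<dots> \<le> K ^ card (S m) * real m powr \<epsilon>"
        using K1 sub finS by (intro mult_right_mono power_increasing card_mono) auto
      finally show ?thesis unfolding K_def S_def .
    qed
  qed
qed

lemma divisor_bound:
  fixes \<epsilon> :: real assumes eps: "\<epsilon> > 0"
  shows "\<exists>C>0. \<forall>m>0. real (D m) \<le> C * real m powr \<epsilon>"
proof -
  define P where "P = nat \<lceil>2 powr (1/\<epsilon>)\<rceil>"
  have P: "2 powr (1/\<epsilon>) \<le> real P" unfolding P_def by linarith
  define K where "K = 1 + 1/(\<epsilon> * ln 2)"
  have K1: "K \<ge> 1" using eps unfolding K_def by simp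
  show ?thesis
  proof (intro exI[of _ "K ^ P"] conjI allI impI)
    show "K ^ P > 0" using K1 by simp
    fix m :: nat assume m: "m > 0"
    have c: "card {q \<in> {..<P}. prime q \<and> q dvd m} \<le> P"
      using card_mono[of "{..<P}" "{q \<in> {..<P}. prime q \<and> q dvd m}"] by auto
    have "real (D m) \<le> K ^ card {q \<in> {..<P}. prime q \<and> q dvd m} * real m powr \<epsilon>"
      using divisor_bound_aux[OF eps P m] unfolding K_def .
    also have "\<dots> \<le> K ^ P * real m powr \<epsilon>"
      using K1 c by (intro mult_right_mono power_increasing) auto
    finally show "real (D m) \<le> K ^ P * real m powr \<epsilon>" .
  qed
qed

lemma A_bound:
  assumes x: "(x::nat) > 0" and xn: "x \<le> n"
  shows "card {(y,z). 0<y \<and> 0<z \<and> n = x*y*z+x+y+z} \<le> D (x*n+1-x*x)"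
proof -
  let ?A = "{(y,z). 0<y \<and> 0<z \<and> n = x*y*z+x+y+z}"
  have key: "(x*y+1)*(x*z+1) = x*n+1-x*x" if "n = x*y*z+x+y+z" for y z
  proof -
    have "(x*y+1)*(x*z+1) + x*x = x*(x*y*z+x+y+z)+1" by (simp add: algebra_simps)
    then have "(x*y+1)*(x*z+1) + x*x = x*n+1" by (simp only: that)
    then show ?thesis by simp
  qed
  have pos: "x*n+1-x*x > 0" using xn by (simp add: mult_le_mono2 le_imp_less_Suc)
  show ?thesis unfolding D_def
  proof (rule card_inj_on_le)
    show "inj_on (\<lambda>(y,z). x*y+1) ?A"
    proof (rule inj_onI)
      fix a b assume a: "a \<in> ?A" and b: "b \<in> ?A" and e: "(\<lambda>(y,z). x*y+1) a = (\<lambda>(y,z). x*y+1) b"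
      obtain y z where az: "a = (y,z)" by (cases a)
      obtain y' z' where bz: "b = (y',z')" by (cases b)
      have h1: "n = x*y*z+x+y+z" using a unfolding az by simp
      have h2: "n = x*y'*z'+x+y'+z'" using b unfolding bz by simp
      have h3: "x*y+1 = x*y'+1" using e unfolding az bz by simp
      note h = h1 h2 h3
      have yy: "y = y'" using x h(3) by simp
      have "x*y*z+x+y+z = x*y*z'+x+y+z'" using h(1,2) yy by simp
      then have "x*y*z+z = x*y*z'+z'" by linarith
      then have P: "(x*y+1)*z = (x*y+1)*z'" by (simp add: algebra_simps)
      have Q: "x*y+1 \<noteq> 0" by simp
      have "z = z'" by (rule mult_left_cancel[THEN iffD1, OF Q P])
      then show "a = b" using yy az bz by simp
    qed
    show "(\<lambda>(y,z). x*y+1) ` ?A \<subseteq> {d. d dvd x*n+1-x*x}"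
    proof
      fix d assume "d \<in> (\<lambda>(y,z). x*y+1) ` ?A"
      then obtain y z where dz: "d = x*y+1" and "(y,z) \<in> ?A" by auto
      then have "n = x*y*z+x+y+z" by simp
      then have "(x*y+1)*(x*z+1) = x*n+1-x*x" by (rule key)
      then show "d \<in> {d. d dvd x*n+1-x*x}" unfolding dz by (metis dvd_triv_left mem_Collect_eq)
    qed
    show "finite {d. d dvd x*n+1-x*x}" using pos by simp
  qed
qed

lemma cube_le: "(a::nat) \<le> b \<Longrightarrow> a \<le> c \<Longrightarrow> a^3 \<le> a*b*c"
proof -
  assume "a \<le> b" "a \<le> c"
  then have "a*a*a \<le> a*b*c" by (intro mult_mono) auto
  then show ?thesis by (simp add: power3_eq_cube)
qed

lemma R3_bound:
  assumes n: "n > 0"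
  shows "R3 n \<le> 3 * (\<Sum>x\<in>{x. 0<x \<and> x^3 \<le> n}. D (x*n+1-x*x))"
proof -
  define T where "T = {(x :: nat, y :: nat, z :: nat). 0 < x \<and> 0 < y \<and> 0 < z \<and> n = x * y * z + x + y + z}"
  define I where "I = {x. 0<x \<and> x^3 \<le> n}"
  define A where "A = (\<lambda>x. {(y,z). 0<y \<and> 0<z \<and> n = x*y*z+x+y+z})"
  define U where "U = {t \<in> T. fst t ^ 3 \<le> n}"
  define f where "f = (\<lambda>(a::nat,b::nat,c::nat). (b,a,c))"
  define g where "g = (\<lambda>(a::nat,b::nat,c::nat). (c,b,a))"
  have finI: "finite I"
  proof -
    have "I \<subseteq> {..n}"
    proof
      fix x assume "x \<in> I"
      then have "x \<le> x^3" "x^3 \<le> n" unfolding I_def by (auto simp: power3_eq_cube)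
      then show "x \<in> {..n}" by simp
    qed
    then show ?thesis by (rule finite_subset) simp
  qed
  have finA: "finite (A x)" for x
  proof -
    have "A x \<subseteq> {..n} \<times> {..n}" unfolding A_def by auto
    then show ?thesis by (rule finite_subset) simp
  qed
  have UI: "U \<subseteq> Sigma I A" unfolding U_def T_def I_def A_def by auto
  have finU: "finite U" by (intro finite_subset[OF UI] finite_SigmaI finI finA)
  have TU: "T \<subseteq> U \<union> f ` U \<union> g ` U"
  proof
    fix t assume t: "t \<in> T"
    obtain x y z where xyz: "t = (x,y,z)" by (cases t) auto
    have e: "0 < x" "0 < y" "0 < z" "n = x*y*z+x+y+z" using t xyz unfolding T_def by auto
    consider "x \<le> y \<and> x \<le> z" | "y \<le> x \<and> y \<le> z" | "z \<le> x \<and> z \<le> y" by linarith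
    then show "t \<in> U \<union> f ` U \<union> g ` U"
    proof cases
      case 1
      then have "x^3 \<le> x*y*z" using cube_le by blast
      then have "x^3 \<le> n" using e by linarith
      then show ?thesis using t xyz unfolding U_def by auto
    next
      case 2
      then have "y^3 \<le> y*x*z" using cube_le by blast
      moreover have "y*x*z = x*y*z" by (simp add: ac_simps)
      ultimately have "y^3 \<le> n" using e by linarith
      moreover have "n = y*x*z+y+x+z" using e(4) \<open>y*x*z = x*y*z\<close> by linarith
      ultimately have "(y,x,z) \<in> U" using e(1-3) unfolding U_def T_def by auto
      moreover have "t = f (y,x,z)" unfolding f_def xyz by simp
      ultimately show ?thesis by blast
    next
      case 3
      then have "z^3 \<le> z*y*x" using cube_le by blast
      moreover have "z*y*x = x*y*z" by (simp add: ac_simps)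
      ultimately have "z^3 \<le> n" using e by linarith
      moreover have "n = z*y*x+z+y+x" using e(4) \<open>z*y*x = x*y*z\<close> by linarith
      ultimately have "(z,y,x) \<in> U" using e(1-3) unfolding U_def T_def by auto
      moreover have "t = g (z,y,x)" unfolding g_def xyz by simp
      ultimately show ?thesis by blast
    qed
  qed
  have cU: "card U \<le> (\<Sum>x\<in>I. D (x*n+1-x*x))"
  proof -
    have "card U \<le> card (Sigma I A)" using UI finI finA by (intro card_mono) auto
    also have "\<dots> = (\<Sum>x\<in>I. card (A x))" using finI finA by simp
    also have "\<dots> \<le> (\<Sum>x\<in>I. D (x*n+1-x*x))"
    proof (intro sum_mono)
      fix x assume "x \<in> I"
      then have "0 < x" "x \<le> x^3" "x^3 \<le> n" unfolding I_def by (auto simp: power3_eq_cube)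
      then show "card (A x) \<le> D (x*n+1-x*x)" unfolding A_def by (intro A_bound) auto
    qed
    finally show ?thesis .
  qed
  have "R3 n = card T" unfolding R3_def T_def ..
  also have "\<dots> \<le> card (U \<union> f ` U \<union> g ` U)" using TU finU by (intro card_mono) auto
  also have "\<dots> \<le> card (U \<union> f ` U) + card (g ` U)" by (rule card_Un_le)
  also have "\<dots> \<le> card U + card (f ` U) + card (g ` U)" using card_Un_le[of U "f ` U"] by simp
  also have "\<dots> \<le> 3 * card U" using card_image_le[OF finU, of f] card_image_le[OF finU, of g] by simp
  also have "\<dots> \<le> 3 * (\<Sum>x\<in>I. D (x*n+1-x*x))" using cU by simp
  finally show ?thesis unfolding I_def by simp
qed

lemma card_I:
  "real (card {x. 0<x \<and> x^3 \<le> n}) \<le> real n powr (1/3)"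
proof -
  define k where "k = nat \<lfloor>real n powr (1/3)\<rfloor>"
  have sub: "{x. 0<x \<and> x^3 \<le> n} \<subseteq> {1..k}"
  proof
    fix x assume "x \<in> {x. 0<x \<and> x^3 \<le> n}"
    then have x: "0 < x" "x^3 \<le> n" by auto
    have e1: "(real x powr 3) powr (1/3) = real x" by (subst powr_powr) (use x in simp)
    have e2: "real x powr 3 = real (x^3)" using x powr_realpow[of "real x" 3] by simp
    have "real x = (real (x^3)) powr (1/3)" using e1 e2 by metis
    also have "(real (x^3)) powr (1/3) \<le> real n powr (1/3)"
      using x by (intro powr_mono2) auto
    finally have "real x \<le> real n powr (1/3)" .
    then have "x \<le> k" unfolding k_def by linarith
    then show "x \<in> {1..k}" using x by auto
  qed
  have "card {x. 0<x \<and> x^3 \<le> n} \<le> card {1..k}" by (rule card_mono[OF _ sub]) simp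
  then have "real (card {x. 0<x \<and> x^3 \<le> n}) \<le> real k" by simp
  also have "\<dots> \<le> real n powr (1/3)" unfolding k_def by simp
  finally show ?thesis .
qed

theorem theorem2:
  fixes \<epsilon> :: real
  assumes "\<epsilon> > 0"
  shows "\<exists>C > 0. \<forall>n :: nat. n > 0 \<longrightarrow> real (R3 n) \<le> C * real n powr (1/3 + \<epsilon>)"
proof -
  define \<delta> where "\<delta> = \<epsilon>/2"
  have d: "\<delta> > 0" using assms unfolding \<delta>_def by simp
  obtain C0 where C0: "C0 > 0" "\<And>m. m > 0 \<Longrightarrow> real (D m) \<le> C0 * real m powr \<delta>"
    using divisor_bound[OF d] by blast
  define C where "C = 3 * C0 * 2 powr \<delta>"
  show ?thesis
  proof (intro exI[of _ C] conjI allI impI)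
    show "C > 0" unfolding C_def using C0 by simp
    fix n :: nat assume n: "n > 0"
    define I where "I = {x. 0<x \<and> x^3 \<le> n}"
    define B where "B = C0 * 2 powr \<delta> * real n powr \<epsilon>"
    have each: "real (D (x*n+1-x*x)) \<le> B" if "x \<in> I" for x
    proof -
      from that have x: "0 < x" "x \<le> x^3" "x^3 \<le> n" unfolding I_def by (auto simp: power3_eq_cube)
      then have xn: "x \<le> n" by linarith
      have pos: "x*n+1-x*x > 0" using xn by (simp add: mult_le_mono2 le_imp_less_Suc)
      have "x*n \<le> n*n" by (rule mult_le_mono1[OF xn])
      then have "x*n+1-x*x \<le> n*n+1" by linarith
      also have "\<dots> \<le> 2*(n*n)" using n by simp
      finally have le: "real (x*n+1-x*x) \<le> 2 * (real n * real n)" by (simp flip: of_nat_mult)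
      have "real (D (x*n+1-x*x)) \<le> C0 * real (x*n+1-x*x) powr \<delta>" using C0(2)[OF pos] .
      also have "\<dots> \<le> C0 * (2 * (real n * real n)) powr \<delta>"
        using C0(1) le d by (intro mult_left_mono powr_mono2) auto
      also have "(2 * (real n * real n)) powr \<delta> = 2 powr \<delta> * real n powr \<epsilon>"
        using n by (simp add: powr_mult \<delta>_def powr_add[symmetric])
      finally show ?thesis unfolding B_def by (simp add: mult.assoc)
    qed
    have "real (R3 n) \<le> 3 * (\<Sum>x\<in>I. real (D (x*n+1-x*x)))"
      using R3_bound[OF n] unfolding I_def by (simp flip: of_nat_sum)
    also have "\<dots> \<le> 3 * (\<Sum>x\<in>I. B)" by (intro mult_left_mono sum_mono each) auto
    also have "\<dots> = 3 * real (card I) * B" by simp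
    also have "\<dots> \<le> 3 * real n powr (1/3) * B"
      using card_I[of n] C0(1) unfolding I_def B_def by (intro mult_right_mono mult_left_mono) auto
    also have "\<dots> = C * real n powr (1/3 + \<epsilon>)"
      unfolding B_def C_def by (simp add: powr_add)
    finally show "real (R3 n) \<le> C * real n powr (1/3 + \<epsilon>)" .
  qed
qed

end
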